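(* Let $m\ge1$ be an integer and $\alpha>0$. (i) Let $a,\lambda\in\mathbb{C}$ with $|\lambda|<\alpha$, and define $K_\lambda f(z)=am\,e^{\lambda z^m}\int_0^ze^{-\lambda w^m}w^{m-1}f(w)\,dw$ for entire $f$. Then $K_\lambda$ is a bounded operator on $\mathcal{F}^\infty_{(\alpha,m)}$ with $\|K_\lambda\|\le\frac{|a|}{\alpha-|\lambda|}$. (ii) For $a_m\in\mathbb{C}$ and $g_m(z)=a_mz^m$, the operator $V_{g_m}f(z)=\int_0^zg_m'(w)f(w)\,dw$ is bounded on $\mathcal{F}^\infty_{(\alpha,m)}$ with $\|V_{g_m}\|\le\frac{|a_m|}{\alpha}$.
   Context: For $\alpha>0$, $m>0$, $\mathcal{F}^\infty_{(\alpha,m)}$ denotes the Banach space of entire functions $f$ with $\|f\|_{(\infty,\alpha,m)}=\sup_{r>0}e^{-\alpha r^m}\max_{|z|=r}|f(z)|<\infty$. *)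

theory Defs
  imports "HOL-Complex_Analysis.Complex_Analysis"
begin

definition fock_weighted :: "real \<Rightarrow> nat \<Rightarrow> (complex \<Rightarrow> complex) \<Rightarrow> real \<Rightarrow> real" where
  "fock_weighted \<alpha> m f r = exp (- \<alpha> * r ^ m) * (SUP z\<in>sphere 0 r. norm (f z))"

definition fock_space :: "real \<Rightarrow> nat \<Rightarrow> (complex \<Rightarrow> complex) set" where
  "fock_space \<alpha> m = {f. f holomorphic_on UNIV \<and> bdd_above (fock_weighted \<alpha> m f ` {0<..})}"

definition fock_norm :: "real \<Rightarrow> nat \<Rightarrow> (complex \<Rightarrow> complex) \<Rightarrow> real" where
  "fock_norm \<alpha> m f = (SUP r\<in>{0<..}. fock_weighted \<alpha> m f r)"

text \<open>Integral from 0 to z of an entire function (path independent; along the segment).\<close>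
definition int0 :: "(complex \<Rightarrow> complex) \<Rightarrow> complex \<Rightarrow> complex" where
  "int0 h z = contour_integral (linepath 0 z) h"

definition K_op :: "complex \<Rightarrow> nat \<Rightarrow> complex \<Rightarrow> (complex \<Rightarrow> complex) \<Rightarrow> complex \<Rightarrow> complex" where
  "K_op a m l f z = a * of_nat m * exp (l * z ^ m) *
      int0 (\<lambda>w. exp (- l * w ^ m) * w ^ (m - 1) * f w) z"

definition V_op :: "(complex \<Rightarrow> complex) \<Rightarrow> (complex \<Rightarrow> complex) \<Rightarrow> complex \<Rightarrow> complex" where
  "V_op g f z = int0 (\<lambda>w. deriv g w * f w) z"

end

theory Submission
  imports Defs
begin

lemma int0_deriv:
  assumes "h holomorphic_on UNIV"
  shows "((int0 h) has_field_derivative h x) (at x)"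
  unfolding int0_def
proof (rule triangle_contour_integrals_starlike_primitive[where S=UNIV and a=0])
  show "continuous_on UNIV h" using assms holomorphic_on_imp_continuous_on by blast
  fix b c :: complex
  have "(h has_contour_integral 0) (linepath 0 b +++ linepath b c +++ linepath c 0)"
    by (rule Cauchy_theorem_triangle) (use assms holomorphic_on_subset in blast)
  then show "contour_integral (linepath 0 b) h + contour_integral (linepath b c) h +
                       contour_integral (linepath c 0) h = 0"
    by (simp add: has_chain_integral_chain_integral3)
qed auto

lemma int0_holo:
  assumes "h holomorphic_on UNIV"
  shows "int0 h holomorphic_on UNIV"
  unfolding holomorphic_on_def field_differentiable_def
  using int0_deriv[OF assms] has_field_derivative_at_within by blast

lemma fock_sphere_bdd:
  assumes "f holomorphic_on UNIV"
  shows "bdd_above ((\<lambda>z. norm (f z)) ` sphere 0 r)"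
proof -
  have "continuous_on (sphere 0 r) (\<lambda>z. norm (f z))"
    using assms holomorphic_on_imp_continuous_on continuous_on_subset
    by (intro continuous_intros) blast
  then have "compact ((\<lambda>z. norm (f z)) ` sphere 0 r)"
    by (intro compact_continuous_image) auto
  then show ?thesis by (rule Elementary_Metric_Spaces.bounded_imp_bdd_above[OF compact_imp_bounded])
qed

lemma fock_weighted_nonneg:
  assumes "f holomorphic_on UNIV" "r \<ge> 0"
  shows "fock_weighted \<alpha> m f r \<ge> 0"
proof -
  obtain w :: complex where w: "w \<in> sphere 0 r"
    using assms(2) by (metis ex_in_conv sphere_eq_empty not_less)
  have "0 \<le> norm (f w)" by simp
  also have "\<dots> \<le> (SUP z\<in>sphere 0 r. norm (f z))"
    by (rule cSUP_upper[OF w fock_sphere_bdd[OF assms(1)]])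
  finally show ?thesis unfolding fock_weighted_def by simp
qed

lemma fock_norm_nonneg:
  assumes "f \<in> fock_space \<alpha> m"
  shows "fock_norm \<alpha> m f \<ge> 0"
proof -
  have "0 \<le> fock_weighted \<alpha> m f 1"
    using assms fock_weighted_nonneg unfolding fock_space_def by auto
  also have "\<dots> \<le> fock_norm \<alpha> m f"
    unfolding fock_norm_def using assms unfolding fock_space_def
    by (intro cSUP_upper) auto
  finally show ?thesis .
qed

lemma fock_pt_nz:
  assumes "f \<in> fock_space \<alpha> m" "w \<noteq> 0"
  shows "norm (f w) \<le> fock_norm \<alpha> m f * exp (\<alpha> * norm w ^ m)"
proof -
  let ?r = "norm w"
  let ?S = "SUP z\<in>sphere 0 ?r. norm (f z)"
  have hol: "f holomorphic_on UNIV" using assms unfolding fock_space_def by auto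
  have fS: "norm (f w) \<le> ?S"
    by (rule cSUP_upper[OF _ fock_sphere_bdd[OF hol]]) simp
  have "exp (- \<alpha> * ?r ^ m) * ?S \<le> fock_norm \<alpha> m f"
    unfolding fock_norm_def using assms
    by (metis (no_types, lifting) cSUP_upper fock_space_def fock_weighted_def greaterThan_iff
        mem_Collect_eq zero_less_norm_iff)
  then have "exp (\<alpha> * ?r ^ m) * (exp (- \<alpha> * ?r ^ m) * ?S) \<le> exp (\<alpha> * ?r ^ m) * fock_norm \<alpha> m f"
    by (rule mult_left_mono) simp
  moreover have e: "exp (\<alpha> * ?r ^ m) * exp (- \<alpha> * ?r ^ m) = 1"
    by (simp add: mult_exp_exp)
  moreover have "exp (\<alpha> * ?r ^ m) * (exp (- \<alpha> * ?r ^ m) * ?S) = ?S"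
    by (metis e mult.assoc mult_1)
  ultimately have "?S \<le> fock_norm \<alpha> m f * exp (\<alpha> * ?r ^ m)"
    by (metis mult.commute)
  with fS show ?thesis by linarith
qed

lemma fock_pt:
  assumes "f \<in> fock_space \<alpha> m"
  shows "norm (f w) \<le> fock_norm \<alpha> m f * exp (\<alpha> * norm w ^ m)"
proof (cases "w = 0")
  case False then show ?thesis using fock_pt_nz[OF assms] by blast
next
  case True
  have hol: "f holomorphic_on UNIV" using assms unfolding fock_space_def by auto
  then have cf: "continuous_on UNIV f" using holomorphic_on_imp_continuous_on by blast
  let ?S = "{w. norm (f w) \<le> fock_norm \<alpha> m f * exp (\<alpha> * norm w ^ m)}"
  have cl: "closed ?S"
    by (intro closed_Collect_le continuous_intros cf)
  define x where "x n = complex_of_real (inverse (real (Suc n)))" for n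
  have "x \<longlonglongrightarrow> complex_of_real 0"
    unfolding x_def by (intro tendsto_of_real LIMSEQ_inverse_real_of_nat)
  moreover have "\<forall>n. x n \<in> ?S"
  proof
    fix n
    have "inverse (real (Suc n)) \<noteq> 0" by simp
    then have "x n \<noteq> 0" unfolding x_def by (metis of_real_eq_0_iff)
    then show "x n \<in> ?S" using fock_pt_nz[OF assms] by simp
  qed
  ultimately have "0 \<in> ?S" using cl closed_sequentially by (metis of_real_0)
  then show ?thesis using True by simp
qed

lemma mono5:
  fixes p q s X X' Y Y' :: real
  assumes "0 \<le> p" "0 \<le> q" "0 \<le> s" "0 \<le> X" "X \<le> X'" "0 \<le> Y" "Y \<le> Y'"
  shows "p * X * q * Y * s \<le> p * X' * q * Y' * s"
proof -
  have "X * Y \<le> X' * Y'" using assms by (intro mult_mono) auto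
  then have "(p * q * s) * (X * Y) \<le> (p * q * s) * (X' * Y')"
    using assms by (intro mult_left_mono) auto
  then show ?thesis by (simp add: mult_ac)
qed

lemma K_bound:
  assumes m: "m \<ge> 1" and al: "\<alpha> > 0" and l: "norm l < \<alpha>" and f: "f \<in> fock_space \<alpha> m"
    and r: "r > 0" and z: "norm z = r"
  shows "norm (K_op a m l f z) \<le> norm a / (\<alpha> - norm l) * fock_norm \<alpha> m f * exp (\<alpha> * r ^ m)"
proof -
  define N where "N = fock_norm \<alpha> m f"
  define R where "R = r ^ m"
  define L where "L = norm l"
  define A where "A = norm a"
  have N0: "N \<ge> 0" unfolding N_def using fock_norm_nonneg[OF f] .
  have L0: "L \<ge> 0" "L < \<alpha>" using l by (auto simp: L_def)
  have hol: "f holomorphic_on UNIV" using f unfolding fock_space_def by auto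
  define h where "h = (\<lambda>w. exp (- l * w ^ m) * w ^ (m - 1) * f w)"
  have holh: "h holomorphic_on UNIV" unfolding h_def using hol by (intro holomorphic_intros) auto
  have "h contour_integrable_on (linepath 0 z)"
    using holh holomorphic_on_imp_continuous_on continuous_on_subset
    by (intro contour_integrable_continuous_linepath) blast
  then have "(h has_contour_integral int0 h z) (linepath 0 z)"
    unfolding int0_def by (rule has_contour_integral_integral)
  then have HI: "((\<lambda>t. h (linepath 0 z t) * (z - 0)) has_integral int0 h z) {0..1}"
    by (simp add: has_contour_integral_linepath)
  define c where "c = a * of_nat m * exp (l * z ^ m)"
  have Keq: "K_op a m l f z = c * int0 h z" unfolding K_op_def c_def h_def by simp
  have HI2: "((\<lambda>t. c * (h (linepath 0 z t) * (z - 0))) has_integral c * int0 h z) {0..1}"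
    by (rule has_integral_mult_right[OF HI])
  define G where "G t = A * N * exp (L * R) / (\<alpha> - L) * exp ((\<alpha> - L) * R * t ^ m)" for t :: real
  define g where "g t = A * N * exp (L * R) * (of_nat m * R * t ^ (m - 1) * exp ((\<alpha> - L) * R * t ^ m))" for t :: real
  have Gd: "(G has_real_derivative g t) (at t within {0..1})" for t
  proof -
    have "(G has_real_derivative A * N * exp (L * R) / (\<alpha> - L) * (exp ((\<alpha> - L) * R * t ^ m) * ((\<alpha> - L) * R * (of_nat m * t ^ (m - 1))))) (at t within {0..1})"
      unfolding G_def by (intro derivative_eq_intros) auto
    moreover have "A * N * exp (L * R) / (\<alpha> - L) * (exp ((\<alpha> - L) * R * t ^ m) * ((\<alpha> - L) * R * (of_nat m * t ^ (m - 1)))) = g t"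
      unfolding g_def using L0 by (simp add: field_simps)
    ultimately show ?thesis by simp
  qed
  have gI: "(g has_integral G 1 - G 0) {0..1}"
    by (rule fundamental_theorem_of_calculus) (auto simp: has_real_derivative_iff_has_vector_derivative[symmetric] Gd)
  have bnd: "norm (c * (h (linepath 0 z t) * (z - 0))) \<le> g t" if t: "t \<in> {0..1}" for t
  proof -
    have t0: "0 \<le> t" "t \<le> 1" using t by auto
    have lp: "linepath 0 z t = of_real t * z" by (simp add: linepath_def scaleR_conv_of_real)
    have eq: "c * (h (linepath 0 z t) * (z - 0)) =
       a * of_nat m * (exp (l * z ^ m) * exp (- l * (of_real t * z) ^ m)) * (of_real t * z) ^ (m - 1) * f (of_real t * z) * z"
      unfolding c_def h_def lp by (simp add: algebra_simps)
    have e1: "norm (exp (l * z ^ m) * exp (- l * (of_real t * z) ^ m)) \<le> exp (L * R * (1 - t ^ m))"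
    proof -
      have "exp (l * z ^ m) * exp (- l * (of_real t * z) ^ m) = exp (l * z ^ m + (- l * (of_real t * z) ^ m))"
        by (simp only: exp_add)
      also have "\<dots> = exp (l * z ^ m * (1 - of_real (t ^ m)))"
        by (simp add: algebra_simps power_mult_distrib)
      also have "norm \<dots> = exp (Re (l * z ^ m * (1 - of_real (t ^ m))))" by (rule norm_exp_eq_Re)
      also have "\<dots> \<le> exp (norm (l * z ^ m * (1 - of_real (t ^ m))))"
        using complex_Re_le_cmod exp_le_cancel_iff by blast
      also have "norm (l * z ^ m * (1 - of_real (t ^ m))) = L * R * (1 - t ^ m)"
      proof -
        have "t ^ m \<le> 1" using t0 by (simp add: power_le_one)
        then have "norm (1 - complex_of_real (t ^ m)) = 1 - t ^ m"
          by (metis abs_of_nonneg diff_ge_0_iff_ge norm_of_real of_real_1 of_real_diff)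
        then show ?thesis by (simp add: norm_mult norm_power L_def R_def z)
      qed
      finally show ?thesis .
    qed
    have e2: "norm ((of_real t * z) ^ (m - 1)) = t ^ (m - 1) * r ^ (m - 1)"
      using t0 by (simp add: norm_mult norm_power z power_mult_distrib)
    have e3: "norm (f (of_real t * z)) \<le> N * exp (\<alpha> * t ^ m * R)"
      using fock_pt[OF f, of "of_real t * z"] t0
      by (simp add: N_def norm_mult z R_def power_mult_distrib mult.assoc)
    have "norm (c * (h (linepath 0 z t) * (z - 0))) =
        A * of_nat m * norm (exp (l * z ^ m) * exp (- l * (of_real t * z) ^ m)) * (t ^ (m - 1) * r ^ (m - 1)) * norm (f (of_real t * z)) * r"
      unfolding eq using e2 by (simp add: norm_mult A_def z)
    also have "\<dots> \<le> A * of_nat m * exp (L * R * (1 - t ^ m)) * (t ^ (m - 1) * r ^ (m - 1)) * (N * exp (\<alpha> * t ^ m * R)) * r"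
      using e1 e3 r t0 by (intro mono5) (auto simp: A_def)
    also have "\<dots> = g t"
    proof -
      have "r ^ (m - 1) * r = R" unfolding R_def using m
        by (metis Suc_diff_1 less_le_trans power_Suc2 zero_less_one)
      moreover have "exp (L * R * (1 - t ^ m)) * exp (\<alpha> * t ^ m * R) = exp (L * R) * exp ((\<alpha> - L) * R * t ^ m)"
        by (simp add: mult_exp_exp algebra_simps)
      moreover have "A * of_nat m * exp (L * R * (1 - t ^ m)) * (t ^ (m - 1) * r ^ (m - 1)) * (N * exp (\<alpha> * t ^ m * R)) * r
          = A * N * (exp (L * R * (1 - t ^ m)) * exp (\<alpha> * t ^ m * R)) * (of_nat m * (r ^ (m - 1) * r) * t ^ (m - 1))"
        by (simp only: mult_ac)
      moreover have "g t = A * N * (exp (L * R) * exp ((\<alpha> - L) * R * t ^ m)) * (of_nat m * R * t ^ (m - 1))"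
        unfolding g_def by (simp only: mult_ac)
      ultimately show ?thesis by simp
    qed
    finally show ?thesis .
  qed
  have "norm (c * int0 h z) \<le> G 1 - G 0"
  proof -
    have "norm (integral {0..1} (\<lambda>t. c * (h (linepath 0 z t) * (z - 0)))) \<le> integral {0..1} g"
      by (rule integral_norm_bound_integral) (use HI2 gI bnd in \<open>auto simp: integrable_on_def\<close>)
    then show ?thesis by (simp only: integral_unique[OF HI2] integral_unique[OF gI])
  qed
  also have "\<dots> \<le> G 1" unfolding G_def using N0 L0 by (auto simp: A_def intro!: divide_nonneg_pos)
  also have "G 1 = A / (\<alpha> - L) * N * exp (\<alpha> * R)"
    unfolding G_def by (simp add: mult_exp_exp algebra_simps)
  finally show ?thesis unfolding Keq A_def L_def N_def R_def .
qed

lemma K_main: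
  assumes m: "m \<ge> 1" and al: "\<alpha> > 0" and l: "norm l < \<alpha>" and f: "f \<in> fock_space \<alpha> m"
  shows "K_op a m l f \<in> fock_space \<alpha> m \<and>
         fock_norm \<alpha> m (K_op a m l f) \<le> norm a / (\<alpha> - norm l) * fock_norm \<alpha> m f"
proof -
  let ?M = "norm a / (\<alpha> - norm l) * fock_norm \<alpha> m f"
  have hol: "f holomorphic_on UNIV" using f unfolding fock_space_def by auto
  define h where "h = (\<lambda>w. exp (- l * w ^ m) * w ^ (m - 1) * f w)"
  have holh: "h holomorphic_on UNIV" unfolding h_def using hol by (intro holomorphic_intros) auto
  have Keq: "K_op a m l f = (\<lambda>z. a * of_nat m * exp (l * z ^ m) * int0 h z)"
    unfolding K_op_def h_def by simp
  have holK: "K_op a m l f holomorphic_on UNIV"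
    unfolding Keq using int0_holo[OF holh] by (intro holomorphic_intros) auto
  have W: "fock_weighted \<alpha> m (K_op a m l f) r \<le> ?M" if r: "r > 0" for r
  proof -
    have "(SUP z\<in>sphere 0 r. norm (K_op a m l f z)) \<le> ?M * exp (\<alpha> * r ^ m)"
    proof (rule cSUP_least)
      show "sphere (0::complex) r \<noteq> {}" using r by simp
      fix z :: complex assume "z \<in> sphere 0 r"
      then have "norm z = r" by simp
      then show "norm (K_op a m l f z) \<le> ?M * exp (\<alpha> * r ^ m)"
        using K_bound[OF m al l f r] by simp
    qed
    then have "exp (- \<alpha> * r ^ m) * (SUP z\<in>sphere 0 r. norm (K_op a m l f z))
        \<le> exp (- \<alpha> * r ^ m) * (?M * exp (\<alpha> * r ^ m))"
      by (rule mult_left_mono) simp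
    also have "\<dots> = ?M"
    proof -
      have e: "exp (- \<alpha> * r ^ m) * exp (\<alpha> * r ^ m) = 1" by (simp add: mult_exp_exp)
      show ?thesis by (metis e mult.left_commute mult_1_right)
    qed
    finally show ?thesis unfolding fock_weighted_def .
  qed
  have bdd: "bdd_above (fock_weighted \<alpha> m (K_op a m l f) ` {0<..})"
    using W by (intro bdd_aboveI2) auto
  have "fock_norm \<alpha> m (K_op a m l f) \<le> ?M"
    unfolding fock_norm_def[of \<alpha> m "K_op a m l f"] using W by (intro cSUP_least) auto
  then show ?thesis using holK bdd unfolding fock_space_def by auto
qed

theorem lemma2:
  fixes m :: nat and \<alpha> :: real
  assumes "m \<ge> 1" and "\<alpha> > 0"
  shows "(\<forall>a l :: complex. norm l < \<alpha> \<longrightarrow>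
            (\<forall>f \<in> fock_space \<alpha> m.
               K_op a m l f \<in> fock_space \<alpha> m \<and>
               fock_norm \<alpha> m (K_op a m l f) \<le> norm a / (\<alpha> - norm l) * fock_norm \<alpha> m f))
       \<and> (\<forall>am :: complex.
            (\<forall>f \<in> fock_space \<alpha> m.
               V_op (\<lambda>z. am * z ^ m) f \<in> fock_space \<alpha> m \<and>
               fock_norm \<alpha> m (V_op (\<lambda>z. am * z ^ m) f) \<le> norm am / \<alpha> * fock_norm \<alpha> m f))"
proof (intro conjI allI impI ballI)
  fix a l :: complex and f assume "norm l < \<alpha>" "f \<in> fock_space \<alpha> m"
  then show "K_op a m l f \<in> fock_space \<alpha> m"
    "fock_norm \<alpha> m (K_op a m l f) \<le> norm a / (\<alpha> - norm l) * fock_norm \<alpha> m f"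
    using K_main[OF assms] by blast+
next
  fix am :: complex and f assume f: "f \<in> fock_space \<alpha> m"
  have hol: "f holomorphic_on UNIV" using f unfolding fock_space_def by auto
  have dv: "deriv (\<lambda>z. am * z ^ m) w = am * (of_nat m * w ^ (m - 1))" for w
    by (rule DERIV_imp_deriv) (auto intro!: derivative_eq_intros)
  have VK: "V_op (\<lambda>z. am * z ^ m) f = K_op am m 0 f"
  proof
    fix z
    have ci: "(\<lambda>w. w ^ (m - 1) * f w) contour_integrable_on (linepath 0 z)"
      using hol holomorphic_on_imp_continuous_on continuous_on_subset
      by (intro contour_integrable_continuous_linepath continuous_intros) blast+
    have "V_op (\<lambda>z. am * z ^ m) f z = int0 (\<lambda>w. (am * of_nat m) * (w ^ (m - 1) * f w)) z"
      unfolding V_op_def dv by (simp add: mult_ac)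
    also have "\<dots> = (am * of_nat m) * int0 (\<lambda>w. w ^ (m - 1) * f w) z"
      unfolding int0_def by (rule contour_integral_lmul[OF ci])
    also have "\<dots> = K_op am m 0 f z" unfolding K_op_def by simp
    finally show "V_op (\<lambda>z. am * z ^ m) f z = K_op am m 0 f z" .
  qed
  have "norm (0::complex) < \<alpha>" using assms by simp
  from K_main[OF assms this f, of am]
  show "V_op (\<lambda>z. am * z ^ m) f \<in> fock_space \<alpha> m"
    "fock_norm \<alpha> m (V_op (\<lambda>z. am * z ^ m) f) \<le> norm am / \<alpha> * fock_norm \<alpha> m f"
    unfolding VK by simp_all
qed

end
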